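(* Let $(x_n)_{n\ge1}$ be a real sequence and $(L_m)_{m\ge1}$ pairwise distinct elements of $[-\infty,+\infty]$ with $\sum_{m=1}^\infty i(x_n;L_m)=1$. Then for every $L\in\mathbb R$ different from all $L_m$, one has $i(x_n;L)=0$, and every subsequence $(x_{k(n)})_{n\ge1}$ converging to $L$ satisfies $\delta_-(\{k(n)\mid n\in\mathbb N\})=0$.
   Context: Let $\mathbb N=\{1,2,\dots\}$. For $K\subseteq\mathbb N$, $\delta_-(K)=\liminf_{n\to\infty}\frac{|K\cap\{1,\dots,n\}|}{n}$, $\delta_+(K)=\limsup_{n\to\infty}\frac{|K\cap\{1,\dots,n\}|}{n}$. For $L\in\mathbb R$: $i(x_n;L)=1-\sup_{\varepsilon>0}\delta_+(\{n\mid |x_n-L|\ge\varepsilon\})$; $i(x_n;+\infty)=1-\sup_{M\in\mathbb R}\delta_+(\{n\mid x_n\le M\})$; $i(x_n;-\infty)=1-\sup_{M\in\mathbb R}\delta_+(\{n\mid x_n\ge M\})$. *)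

theory Defs
  imports "HOL-Analysis.Analysis"
begin

text \<open>Natural numbers of the paper are {1,2,...}; a sequence is a function nat => real
  whose value at 0 is irrelevant (all counting is done on {1..n}).\<close>

definition lower_density :: "nat set \<Rightarrow> real" where
  "lower_density K = real_of_ereal
     (liminf (\<lambda>n. ereal (real (card (K \<inter> {1..n})) / real n)))"

definition upper_density :: "nat set \<Rightarrow> real" where
  "upper_density K = real_of_ereal
     (limsup (\<lambda>n. ereal (real (card (K \<inter> {1..n})) / real n)))"

definition stat_index :: "(nat \<Rightarrow> real) \<Rightarrow> ereal \<Rightarrow> real" where
  "stat_index x L = (case L of
      ereal l \<Rightarrow> 1 - (SUP e\<in>{0<..}. upper_density {n. \<bar>x n - l\<bar> \<ge> e})
    | PInfty \<Rightarrow> 1 - (SUP M\<in>(UNIV::real set). upper_density {n. x n \<le> M})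
    | MInfty \<Rightarrow> 1 - (SUP M\<in>(UNIV::real set). upper_density {n. x n \<ge> M}))"

end

theory Submission
  imports Defs
begin

definition cnt :: "nat set \<Rightarrow> nat \<Rightarrow> real" where
  "cnt K n = real (card (K \<inter> {1..n}))"

definition rat :: "nat set \<Rightarrow> nat \<Rightarrow> real" where
  "rat K n = real (card (K \<inter> {1..n})) / real n"

lemma cnt_le: "cnt K n \<le> real n"
proof -
  have "card (K \<inter> {1..n}) \<le> card {1..n}" by (rule card_mono) auto
  thus ?thesis unfolding cnt_def by simp
qed

lemma rat_bounds: "0 \<le> rat K n" "rat K n \<le> 1"
  using cnt_le[of K n] unfolding rat_def cnt_def
  by (auto simp: divide_le_eq_1)

lemma limsup_rat: "limsup (\<lambda>n. ereal (rat K n)) = ereal (upper_density K)"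
   and ud_bounds: "0 \<le> upper_density K" "upper_density K \<le> 1"
proof -
  have a: "limsup (\<lambda>n. ereal (rat K n)) \<le> 1"
    by (rule Limsup_bounded) (use rat_bounds in auto)
  have "0 \<le> liminf (\<lambda>n. ereal (rat K n))"
    by (rule Liminf_bounded) (use rat_bounds in auto)
  also have "\<dots> \<le> limsup (\<lambda>n. ereal (rat K n))" by (rule Liminf_le_Limsup) simp
  finally have b: "0 \<le> limsup (\<lambda>n. ereal (rat K n))" .
  have ud: "upper_density K = real_of_ereal (limsup (\<lambda>n. ereal (rat K n)))"
    unfolding upper_density_def rat_def by simp
  from a b show "limsup (\<lambda>n. ereal (rat K n)) = ereal (upper_density K)"
    unfolding ud by (cases "limsup (\<lambda>n. ereal (rat K n))") auto
  from a b show "0 \<le> upper_density K" "upper_density K \<le> 1"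
    unfolding ud by (cases "limsup (\<lambda>n. ereal (rat K n))"; auto)+
qed

lemma liminf_rat: "liminf (\<lambda>n. ereal (rat K n)) = ereal (lower_density K)"
   and ld_bounds: "0 \<le> lower_density K"
proof -
  have b: "0 \<le> liminf (\<lambda>n. ereal (rat K n))"
    by (rule Liminf_bounded) (use rat_bounds in auto)
  have "liminf (\<lambda>n. ereal (rat K n)) \<le> limsup (\<lambda>n. ereal (rat K n))" by (rule Liminf_le_Limsup) simp
  also have "\<dots> \<le> 1"
    by (rule Limsup_bounded) (use rat_bounds in auto)
  finally have a: "liminf (\<lambda>n. ereal (rat K n)) \<le> 1" .
  have ld: "lower_density K = real_of_ereal (liminf (\<lambda>n. ereal (rat K n)))"
    unfolding lower_density_def rat_def by simp
  from a b show "liminf (\<lambda>n. ereal (rat K n)) = ereal (lower_density K)"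
    unfolding ld by (cases "liminf (\<lambda>n. ereal (rat K n))") auto
  from a b show "0 \<le> lower_density K"
    unfolding ld by (cases "liminf (\<lambda>n. ereal (rat K n))"; auto)
qed

lemma ud_ev: "upper_density K < c \<Longrightarrow> eventually (\<lambda>n. cnt K n < c * real n) sequentially"
proof -
  assume "upper_density K < c"
  hence "limsup (\<lambda>n. ereal (rat K n)) < ereal c" by (simp add: limsup_rat)
  hence "eventually (\<lambda>n. ereal (rat K n) < ereal c) sequentially" by (rule Limsup_lessD)
  moreover have "eventually (\<lambda>n. n \<ge> 1) sequentially" by (rule eventually_ge_at_top)
  ultimately show ?thesis
    by eventually_elim (auto simp: rat_def cnt_def divide_less_eq)
qed

lemma ld_ev: "c < lower_density K \<Longrightarrow> eventually (\<lambda>n. c * real n < cnt K n) sequentially"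
proof -
  assume "c < lower_density K"
  hence "ereal c < liminf (\<lambda>n. ereal (rat K n))" by (simp add: liminf_rat)
  hence "eventually (\<lambda>n. ereal c < ereal (rat K n)) sequentially" by (rule less_LiminfD)
  moreover have "eventually (\<lambda>n. n \<ge> 1) sequentially" by (rule eventually_ge_at_top)
  ultimately show ?thesis
    by eventually_elim (auto simp: rat_def cnt_def less_divide_eq)
qed

lemma cnt_compl: "cnt (- C) n = real n - cnt C n"
proof -
  have "{1..n} = (-C \<inter> {1..n}) \<union> (C \<inter> {1..n})" by auto
  hence "card {1..n} = card (-C \<inter> {1..n}) + card (C \<inter> {1..n})"
    by (metis card_Un_disjoint finite_Int finite_atLeastAtMost inf.commute inf_compl_bot_left2 inf_left_commute inf_sup_aci(1))
  thus ?thesis unfolding cnt_def by simp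
qed


lemma compl_step:
  assumes "upper_density C \<le> 1 - i" "\<epsilon> > 0"
  shows "eventually (\<lambda>n. (i - \<epsilon>) * real n < cnt (- C) n) sequentially"
proof -
  have "eventually (\<lambda>n. cnt C n < (1 - i + \<epsilon>) * real n) sequentially"
    by (rule ud_ev) (use assms in simp)
  thus ?thesis by eventually_elim (simp add: cnt_compl algebra_simps)
qed

lemma index_set:
  fixes x :: "nat \<Rightarrow> real"
  assumes U: "open U" "P \<in> U" and e: "\<epsilon> > 0"
  shows "\<exists>A. A \<subseteq> {n. ereal (x n) \<in> U} \<and>
     eventually (\<lambda>n. (stat_index x P - \<epsilon>) * real n < cnt A n) sequentially"
proof (cases P)
  case (real l)
  have "open (ereal -` U)" using U(1) by (rule open_ereal_vimage)
  moreover have "l \<in> ereal -` U" using U real by simp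
  ultimately obtain d where d: "d > 0" "ball l d \<subseteq> ereal -` U" by (rule openE)
  define C where "C = {n. d \<le> \<bar>x n - l\<bar>}"
  have "upper_density C \<le> (SUP e\<in>{0<..}. upper_density {n. \<bar>x n - l\<bar> \<ge> e})"
    unfolding C_def by (rule cSUP_upper) (use d ud_bounds in \<open>auto intro!: bdd_aboveI2\<close>)
  hence "upper_density C \<le> 1 - stat_index x P" unfolding stat_index_def real by simp
  from compl_step[OF this e] have ev: "eventually (\<lambda>n. (stat_index x P - \<epsilon>) * real n < cnt (- C) n) sequentially" .
  have "- C \<subseteq> {n. ereal (x n) \<in> U}"
  proof
    fix n assume "n \<in> - C"
    hence "x n \<in> ball l d" by (auto simp: C_def dist_real_def abs_minus_commute)
    thus "n \<in> {n. ereal (x n) \<in> U}" using d by auto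
  qed
  with ev show ?thesis by blast
next
  case PInf
  obtain M where M: "{ereal M<..} \<subseteq> U" using open_PInfty[OF U(1)] U PInf by auto
  define C where "C = {n. x n \<le> M}"
  have "upper_density C \<le> (SUP M\<in>(UNIV::real set). upper_density {n. x n \<le> M})"
    unfolding C_def by (rule cSUP_upper) (use ud_bounds in \<open>auto intro!: bdd_aboveI2\<close>)
  hence "upper_density C \<le> 1 - stat_index x P" unfolding stat_index_def PInf by simp
  from compl_step[OF this e] have ev: "eventually (\<lambda>n. (stat_index x P - \<epsilon>) * real n < cnt (- C) n) sequentially" .
  have "- C \<subseteq> {n. ereal (x n) \<in> U}" using M by (auto simp: C_def)
  with ev show ?thesis by blast
next
  case MInf
  obtain M where M: "{..<ereal M} \<subseteq> U" using open_MInfty[OF U(1)] U MInf by auto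
  define C where "C = {n. x n \<ge> M}"
  have "upper_density C \<le> (SUP M\<in>(UNIV::real set). upper_density {n. x n \<ge> M})"
    unfolding C_def by (rule cSUP_upper) (use ud_bounds in \<open>auto intro!: bdd_aboveI2\<close>)
  hence "upper_density C \<le> 1 - stat_index x P" unfolding stat_index_def MInf by simp
  from compl_step[OF this e] have ev: "eventually (\<lambda>n. (stat_index x P - \<epsilon>) * real n < cnt (- C) n) sequentially" .
  have "- C \<subseteq> {n. ereal (x n) \<in> U}" using M by (auto simp: C_def)
  with ev show ?thesis by blast
qed


lemma separate:
  fixes P :: "nat \<Rightarrow> 'a::t2_space"
  assumes "finite S" "inj_on P S"
  shows "\<exists>U. \<forall>j\<in>S. open (U j) \<and> P j \<in> U j \<and> (\<forall>i\<in>S. i \<noteq> j \<longrightarrow> U i \<inter> U j = {})"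
proof -
  define Q where "Q i j p \<longleftrightarrow> (P i \<noteq> P j \<longrightarrow> open (fst p) \<and> open (snd p) \<and> P i \<in> fst p \<and> P j \<in> snd p \<and> fst p \<inter> snd p = {})" for i j p
  have ex: "\<exists>p. Q i j p" for i j
    using hausdorff[of "P i" "P j"] unfolding Q_def by (cases "P i = P j") auto
  define f where "f i j = fst (SOME p. Q i j p)" for i j
  define g where "g i j = snd (SOME p. Q i j p)" for i j
  have fg: "open (f i j) \<and> open (g i j) \<and> P i \<in> f i j \<and> P j \<in> g i j \<and> f i j \<inter> g i j = {}" if "P i \<noteq> P j" for i j
    using someI_ex[OF ex[of i j]] that unfolding Q_def f_def g_def by auto
  define N where "N i j = (if i < j then f i j else g j i)" for i j
  define U where "U i = (\<Inter>j\<in>S - {i}. N i j)" for i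
  have Nij: "open (N i j) \<and> P i \<in> N i j" if "i \<in> S" "j \<in> S" "i \<noteq> j" for i j
    using fg[of i j] fg[of j i] that assms(2) unfolding N_def inj_on_def by auto
  have Ndis: "N i j \<inter> N j i = {}" if "i \<in> S" "j \<in> S" "i \<noteq> j" for i j
    using fg[of i j] fg[of j i] that assms(2) unfolding N_def inj_on_def by (cases "i < j") auto
  show ?thesis
  proof (intro exI ballI conjI impI)
    fix j assume j: "j \<in> S"
    show "open (U j)" unfolding U_def using assms(1) Nij j by (intro open_INT) auto
    show "P j \<in> U j" unfolding U_def using Nij j by auto
    fix i assume i: "i \<in> S" "i \<noteq> j"
    have "U i \<subseteq> N i j" "U j \<subseteq> N j i" unfolding U_def using i j by auto
    thus "U i \<inter> U j = {}" using Ndis[OF i(1) j i(2)] by auto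
  qed
qed


lemma core:
  fixes x :: "nat \<Rightarrow> real" and Ls :: "nat \<Rightarrow> ereal"
  assumes inj: "inj_on Ls {1..}"
    and sum1: "(\<lambda>m. stat_index x (Ls (m + 1))) sums 1"
    and notin: "ereal L \<notin> Ls ` {1..}"
    and hyp: "\<And>U \<epsilon>. open U \<Longrightarrow> ereal L \<in> U \<Longrightarrow> \<epsilon> > 0 \<Longrightarrow>
       \<exists>A. A \<subseteq> {n. ereal (x n) \<in> U} \<and> eventually (\<lambda>n. (a - \<epsilon>) * real n < cnt A n) sequentially"
  shows "a \<le> 0"
proof (rule ccontr)
  assume "\<not> a \<le> 0"
  hence apos: "a > 0" by simp
  define \<epsilon> where "\<epsilon> = a / 4"
  have \<epsilon>: "\<epsilon> > 0" using apos by (simp add: \<epsilon>_def)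
  have "(\<lambda>M. \<Sum>m<M. stat_index x (Ls (m + 1))) \<longlonglongrightarrow> 1" using sum1 by (simp add: sums_def)
  hence "eventually (\<lambda>M. 1 - \<epsilon> < (\<Sum>m<M. stat_index x (Ls (m + 1)))) sequentially"
    by (rule order_tendstoD) (use \<epsilon> in simp)
  then obtain M where M: "1 - \<epsilon> < (\<Sum>m<M. stat_index x (Ls (m + 1)))"
    by (auto simp: eventually_sequentially)
  define P where "P j = (if j = 0 then ereal L else Ls j)" for j
  define S where "S = {0..M}"
  have finS: "finite S" by (simp add: S_def)
  have injP: "inj_on P S"
  proof (rule inj_onI)
    fix i j assume ij: "i \<in> S" "j \<in> S" "P i = P j"
    show "i = j"
    proof (cases "i = 0"; cases "j = 0")
      assume "i \<noteq> 0" "j \<noteq> 0"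
      thus ?thesis using ij inj unfolding P_def inj_on_def by auto
    next
      assume "i = 0" "j \<noteq> 0"
      thus ?thesis using ij notin unfolding P_def by (auto simp: image_iff)
    next
      assume "i \<noteq> 0" "j = 0"
      thus ?thesis using ij notin unfolding P_def by (metis atLeast_iff image_eqI less_one not_le)
    qed simp
  qed
  obtain U where U: "\<And>j. j \<in> S \<Longrightarrow> open (U j) \<and> P j \<in> U j \<and> (\<forall>i\<in>S. i \<noteq> j \<longrightarrow> U i \<inter> U j = {})"
    using separate[OF finS injP] by blast
  define c where "c j = (if j = 0 then a else stat_index x (Ls j))" for j
  define \<delta> where "\<delta> = \<epsilon> / real (M + 1)"
  have \<delta>: "\<delta> > 0" using \<epsilon> by (simp add: \<delta>_def)
  have "\<forall>j\<in>S. \<exists>A. A \<subseteq> {n. ereal (x n) \<in> U j} \<and> eventually (\<lambda>n. (c j - \<delta>) * real n < cnt A n) sequentially"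
  proof
    fix j assume j: "j \<in> S"
    show "\<exists>A. A \<subseteq> {n. ereal (x n) \<in> U j} \<and> eventually (\<lambda>n. (c j - \<delta>) * real n < cnt A n) sequentially"
    proof (cases "j = 0")
      case True
      thus ?thesis using hyp[of "U j" \<delta>] U[OF j] \<delta> by (simp add: c_def P_def)
    next
      case False
      thus ?thesis using index_set[of "U j" "P j" \<delta> x] U[OF j] \<delta> by (simp add: c_def P_def)
    qed
  qed
  then obtain A where A: "\<And>j. j \<in> S \<Longrightarrow> A j \<subseteq> {n. ereal (x n) \<in> U j}"
    "\<And>j. j \<in> S \<Longrightarrow> eventually (\<lambda>n. (c j - \<delta>) * real n < cnt (A j) n) sequentially"
    by metis
  have "eventually (\<lambda>n. \<forall>j\<in>S. (c j - \<delta>) * real n < cnt (A j) n) sequentially"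
    using A(2) finS by (simp add: eventually_ball_finite)
  then obtain n where n: "\<And>j. j \<in> S \<Longrightarrow> (c j - \<delta>) * real n < cnt (A j) n"
    by (auto simp: eventually_sequentially)
  have disj: "A i \<inter> A j = {}" if "i \<in> S" "j \<in> S" "i \<noteq> j" for i j
    using A(1)[OF that(1)] A(1)[OF that(2)] U[OF that(2)] that by blast
  have "(\<Sum>j\<in>S. cnt (A j) n) = real (\<Sum>j\<in>S. card (A j \<inter> {1..n}))"
    by (simp add: cnt_def)
  also have "(\<Sum>j\<in>S. card (A j \<inter> {1..n})) = card (\<Union>j\<in>S. A j \<inter> {1..n})"
    by (rule card_UN_disjoint[symmetric]) (use finS disj in auto)
  also have "\<dots> \<le> card {1..n}" by (rule card_mono) auto
  finally have le: "(\<Sum>j\<in>S. cnt (A j) n) \<le> real n" by simp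
  have "(\<Sum>j\<in>S. (c j - \<delta>) * real n) < (\<Sum>j\<in>S. cnt (A j) n)"
    by (rule sum_strict_mono) (use finS n in \<open>auto simp: S_def\<close>)
  hence lt: "((\<Sum>j\<in>S. c j) - \<epsilon>) * real n < real n"
    using le \<delta> by (simp add: sum_distrib_right[symmetric] sum_subtractf S_def \<delta>_def)
  have npos: "real n > 0" using lt by (cases "n = 0") auto
  have "(\<Sum>j\<in>S. c j) - \<epsilon> < 1" using lt npos by simp
  moreover have "(\<Sum>j\<in>S. c j) = a + (\<Sum>m<M. stat_index x (Ls (m + 1)))"
  proof -
    have "(\<Sum>j\<in>S. c j) = c 0 + (\<Sum>m<M. c (Suc m))"
      unfolding S_def atLeast0AtMost lessThan_Suc_atMost[symmetric] by (rule sum.lessThan_Suc_shift)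
    thus ?thesis by (simp add: c_def)
  qed
  ultimately show False using M \<epsilon>_def apos by simp
qed


theorem mainTheorem3:
  fixes x :: "nat \<Rightarrow> real" and Ls :: "nat \<Rightarrow> ereal"
  assumes distinct: "inj_on Ls {1..}"
    and sum1: "(\<lambda>m. stat_index x (Ls (m + 1))) sums 1"
  shows "\<forall>L::real. ereal L \<notin> Ls ` {1..} \<longrightarrow>
           stat_index x (ereal L) = 0 \<and>
           (\<forall>k :: nat \<Rightarrow> nat. strict_mono_on {1..} k \<and> (\<forall>n\<ge>1. k n \<ge> 1)
               \<and> (\<lambda>n. x (k n)) \<longlonglongrightarrow> L
               \<longrightarrow> lower_density (k ` {1..}) = 0)"
proof (intro allI impI, rule conjI)
  fix L :: real assume notin: "ereal L \<notin> Ls ` {1..}"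
  have "(SUP e\<in>{0<..}. upper_density {n. \<bar>x n - L\<bar> \<ge> e}) \<le> 1"
    by (rule cSUP_least) (auto simp: ud_bounds)
  hence ge: "stat_index x (ereal L) \<ge> 0" by (simp add: stat_index_def)
  have "stat_index x (ereal L) \<le> 0"
    by (rule core[OF distinct sum1 notin]) (rule index_set, auto)
  with ge show "stat_index x (ereal L) = 0" by simp
  show "\<forall>k :: nat \<Rightarrow> nat. strict_mono_on {1..} k \<and> (\<forall>n\<ge>1. k n \<ge> 1)
               \<and> (\<lambda>n. x (k n)) \<longlonglongrightarrow> L
               \<longrightarrow> lower_density (k ` {1..}) = 0"
  proof (intro allI impI)
    fix k :: "nat \<Rightarrow> nat"
    assume "strict_mono_on {1..} k \<and> (\<forall>n\<ge>1. k n \<ge> 1) \<and> (\<lambda>n. x (k n)) \<longlonglongrightarrow> L"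
    hence lim: "(\<lambda>n. x (k n)) \<longlonglongrightarrow> L" by blast
    define K where "K = k ` {1..}"
    have "lower_density K \<le> 0"
    proof (rule core[OF distinct sum1 notin])
      fix U \<epsilon> assume U: "open U" "ereal L \<in> U" and \<epsilon>: "(\<epsilon>::real) > 0"
      have "(\<lambda>n. ereal (x (k n))) \<longlonglongrightarrow> ereal L" using lim by (rule tendsto_ereal)
      hence "eventually (\<lambda>n. ereal (x (k n)) \<in> U) sequentially"
        using U by (rule topological_tendstoD)
      then obtain N where N: "\<And>n. n \<ge> N \<Longrightarrow> ereal (x (k n)) \<in> U"
        by (auto simp: eventually_sequentially)
      define A where "A = K \<inter> {n. ereal (x n) \<in> U}"
      define F where "F = k ` {..<N}"
      have KA: "K \<subseteq> A \<union> F"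
      proof
        fix m assume "m \<in> K"
        then obtain j where j: "m = k j" "j \<ge> 1" by (auto simp: K_def)
        show "m \<in> A \<union> F"
        proof (cases "j < N")
          case True thus ?thesis using j by (auto simp: F_def)
        next
          case False thus ?thesis using j N \<open>m \<in> K\<close> by (auto simp: A_def)
        qed
      qed
      have cardF: "card F \<le> N" unfolding F_def by (metis card_image_le card_lessThan finite_lessThan)
      have cntA: "cnt K n \<le> cnt A n + real N" for n
      proof -
        have "card (K \<inter> {1..n}) \<le> card ((A \<inter> {1..n}) \<union> F)"
          by (rule card_mono) (use KA in \<open>auto simp: F_def\<close>)
        also have "\<dots> \<le> card (A \<inter> {1..n}) + card F" by (rule card_Un_le)
        finally show ?thesis using cardF unfolding cnt_def by linarith
      qed
      have e1: "eventually (\<lambda>n. (lower_density K - \<epsilon>/2) * real n < cnt K n) sequentially"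
        by (rule ld_ev) (use \<epsilon> in simp)
      have "eventually (\<lambda>n. 2 * real N / \<epsilon> < real n) sequentially"
        using filterlim_real_sequentially by (simp add: filterlim_at_top_dense)
      hence e2: "eventually (\<lambda>n. real N < \<epsilon>/2 * real n) sequentially"
        by eventually_elim (use \<epsilon> in \<open>simp add: field_simps\<close>)
      have "eventually (\<lambda>n. (lower_density K - \<epsilon>) * real n < cnt A n) sequentially"
        using e1 e2
      proof eventually_elim
        case (elim n)
        thus ?case using cntA[of n] by (simp add: algebra_simps)
      qed
      moreover have "A \<subseteq> {n. ereal (x n) \<in> U}" by (auto simp: A_def)
      ultimately show "\<exists>A. A \<subseteq> {n. ereal (x n) \<in> U} \<and>
         eventually (\<lambda>n. (lower_density K - \<epsilon>) * real n < cnt A n) sequentially" by blast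
    qed
    with ld_bounds[of K] show "lower_density (k ` {1..}) = 0" by (simp add: K_def)
  qed
qed

end
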